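(* Every real CPS tensor $\mathcal{A}\in\mathbb{R}^{n\times n\times n\times n}$ admits a decomposition \[ \mathcal{A}=\sum_{i=1}^r\lambda_i\, a_i\otimes a_i\otimes b_i\otimes b_i, \] with $\lambda_i\in\mathbb{R}$ and $a_i,b_i\in\mathbb{R}^n$ for $i=1,\dots,r$.
   Context: A real tensor $\mathcal{A}\in\mathbb{R}^{n\times n\times n\times n}$ is (real) conjugate partial-symmetric (CPS) if $\mathcal{A}_{ijkl}=\mathcal{A}_{klij}=\mathcal{A}_{jikl}=\mathcal{A}_{ijlk}$ for all indices. $(u\otimes v\otimes w\otimes z)_{ijkl}=u_iv_jw_kz_l$. *)

theory Defs
  imports "HOL-Analysis.Analysis"
begin

text \<open>A real fourth-order tensor in R^(n x n x n x n), indices ranging over a finite type 'n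
  with CARD('n) = n.\<close>
type_synonym 'n tensor4 = "'n \<Rightarrow> 'n \<Rightarrow> 'n \<Rightarrow> 'n \<Rightarrow> real"

definition cps :: "('n::finite) tensor4 \<Rightarrow> bool" where
  "cps A \<longleftrightarrow> (\<forall>i j k l. A i j k l = A k l i j \<and> A i j k l = A j i k l \<and> A i j k l = A i j l k)"

definition outer4 :: "real^'n \<Rightarrow> real^'n \<Rightarrow> real^'n \<Rightarrow> real^'n \<Rightarrow> ('n::finite) tensor4" where
  "outer4 u v w z = (\<lambda>i j k l. u $ i * v $ j * w $ k * z $ l)"

end

theory Submission
  imports Defs
begin

definition rep :: "('n::finite) tensor4 \<Rightarrow> bool" where
  "rep T \<longleftrightarrow> (\<exists>(r::nat) (lam::nat \<Rightarrow> real) (a::nat \<Rightarrow> real^'n) (b::nat \<Rightarrow> real^'n).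
           T = (\<lambda>i j k l. \<Sum>p<r. lam p * outer4 (a p) (a p) (b p) (b p) i j k l))"

lemma rep_zero: "rep (\<lambda>i j k l. 0)"
  unfolding rep_def by (rule exI[where x="0::nat"]) simp

lemma rep_add1:
  fixes T :: "('n::finite) tensor4"
  assumes "rep T"
  shows "rep (\<lambda>i j k l. T i j k l + c * outer4 x x y y i j k l)"
proof -
  obtain r :: nat and lam :: "nat \<Rightarrow> real" and a b :: "nat \<Rightarrow> real^'n" where T: "T = (\<lambda>i j k l. \<Sum>p<r. lam p * outer4 (a p) (a p) (b p) (b p) i j k l)"
    using assms unfolding rep_def by auto
  show ?thesis unfolding rep_def T
    apply (rule exI[where x="Suc r"])
    apply (rule exI[where x="lam(r:=c)"])
    apply (rule exI[where x="a(r:=x)"])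
    apply (rule exI[where x="b(r:=y)"])
    apply (intro ext)
    apply (simp add: lessThan_Suc)
    done
qed

lemma rep_add:
  fixes T S :: "('n::finite) tensor4"
  assumes "rep T" "rep S"
  shows "rep (\<lambda>i j k l. T i j k l + S i j k l)"
proof -
  obtain r :: nat and lam :: "nat \<Rightarrow> real" and a b :: "nat \<Rightarrow> real^'n" where S: "S = (\<lambda>i j k l. \<Sum>p<r. lam p * outer4 (a p) (a p) (b p) (b p) i j k l)"
    using assms(2) unfolding rep_def by auto
  have "rep (\<lambda>i j k l. T i j k l + (\<Sum>p<m. lam p * outer4 (a p) (a p) (b p) (b p) i j k l))" for m
  proof (induction m)
    case 0 then show ?case using assms(1) by simp
  next
    case (Suc m)
    from rep_add1[OF Suc, of "lam m" "a m" "b m"] show ?case by (simp add: add.assoc)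
  qed
  then show ?thesis unfolding S by simp
qed

lemma rep_single: "rep (\<lambda>i j k l. c * outer4 x x y y i j k l)"
  using rep_add1[OF rep_zero, of c x y] by simp

lemma rep_neg: "rep (\<lambda>i j k l. - (c * outer4 x x y y i j k l))"
  using rep_single[of "-c" x y] by simp

lemma rep_sum:
  fixes f :: "'a \<Rightarrow> ('n::finite) tensor4"
  assumes "finite F" "\<And>x. x \<in> F \<Longrightarrow> rep (f x)"
  shows "rep (\<lambda>i j k l. \<Sum>x\<in>F. f x i j k l)"
  using assms
proof (induction F rule: finite_induct)
  case empty then show ?case using rep_zero by simp
next
  case (insert x F)
  have 1: "rep (f x)" using insert.prems by simp
  have 2: "rep (\<lambda>i j k l. \<Sum>x\<in>F. f x i j k l)" using insert.IH insert.prems by simp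
  have "rep (\<lambda>i j k l. f x i j k l + (\<Sum>x\<in>F. f x i j k l))"
    using rep_add[OF 1 2] .
  then show ?case using insert by simp
qed

lemma rep_term:
  fixes x y z u v w :: "real^'n::finite"
  shows "rep (\<lambda>i j k l. c * (((x $ i)*(x $ j) - (y $ i)*(y $ j) - (z $ i)*(z $ j)) * ((u $ k)*(u $ l) - (v $ k)*(v $ l) - (w $ k)*(w $ l))))"
proof -
  let ?s = "\<lambda>d (p::real^'n) (q::real^'n). (\<lambda>i j k l. d * outer4 p p q q i j k l)"
  have r: "rep (?s d p q)" for d p q by (rule rep_single)
  have R: "rep (\<lambda>i j k l. ?s c x u i j k l + ?s (-c) x v i j k l + ?s (-c) x w i j k l
   + ?s (-c) y u i j k l + ?s c y v i j k l + ?s c y w i j k l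
   + ?s (-c) z u i j k l + ?s c z v i j k l + ?s c z w i j k l)"
    apply (rule rep_add[OF _ r])+
    apply (rule r)
    done
  have E: "(\<lambda>i j k l. ?s c x u i j k l + ?s (-c) x v i j k l + ?s (-c) x w i j k l
   + ?s (-c) y u i j k l + ?s c y v i j k l + ?s c y w i j k l
   + ?s (-c) z u i j k l + ?s c z v i j k l + ?s c z w i j k l)
   = (\<lambda>i j k l. c * (((x $ i)*(x $ j) - (y $ i)*(y $ j) - (z $ i)*(z $ j)) * ((u $ k)*(u $ l) - (v $ k)*(v $ l) - (w $ k)*(w $ l))))"
    by (intro ext) (simp add: outer4_def algebra_simps)
  show ?thesis using R unfolding E .
qed

definition X :: "'n::finite \<Rightarrow> 'n \<Rightarrow> 'n \<Rightarrow> 'n \<Rightarrow> real" where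
  "X p q i j = (axis p 1 + axis q 1 :: real^'n)$i * (axis p 1 + axis q 1 :: real^'n)$j
     - (axis p 1 :: real^'n)$i * (axis p 1 :: real^'n)$j - (axis q 1 :: real^'n)$i * (axis q 1 :: real^'n)$j"

lemma ax: "(axis p (1::real) :: real^'n::finite) $ i = (if i = p then 1 else 0)"
  by (simp add: axis_def)

lemma X_eq: "X p q i j = (if p = i \<and> q = j then 1 else 0) + (if q = i \<and> p = j then 1 else 0)"
  unfolding X_def vector_add_component ax
  by (cases "p=i"; cases "q=j"; cases "q=i"; cases "p=j"; simp)

lemma inner:
  fixes f :: "'n::finite \<Rightarrow> 'n \<Rightarrow> real"
  shows "(\<Sum>t\<in>UNIV. f s t * X s t k l) = (if s = k then f s l else 0) + (if s = l then f s k else 0)"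
proof -
  have "(\<Sum>t\<in>UNIV. f s t * X s t k l) = (\<Sum>t\<in>UNIV. (if t = l then (if s = k then f s t else 0) else 0) + (if t = k then (if s = l then f s t else 0) else 0))"
    by (rule sum.cong) (auto simp: X_eq)
  also have "\<dots> = (if s = k then f s l else 0) + (if s = l then f s k else 0)"
    by (simp add: sum.distrib)
  finally show ?thesis .
qed

lemma delta_sum:
  fixes f :: "'n::finite \<Rightarrow> 'n \<Rightarrow> real"
  shows "(\<Sum>s\<in>UNIV. \<Sum>t\<in>UNIV. f s t * X s t k l) = f k l + f l k"
  by (simp add: inner sum.distrib)

lemma main_eq:
  fixes A :: "('n::finite) tensor4"
  assumes sym1: "\<And>i j k l. A i j k l = A j i k l" and sym2: "\<And>i j k l. A i j k l = A i j l k"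
  shows "A i j k l = (\<Sum>p\<in>UNIV. \<Sum>q\<in>UNIV. \<Sum>s\<in>UNIV. \<Sum>t\<in>UNIV.
              (A p q s t / 4) * (X p q i j * X s t k l))"
  proof -
    have "(\<Sum>p\<in>UNIV. \<Sum>q\<in>UNIV. \<Sum>s\<in>UNIV. \<Sum>t\<in>UNIV.
              (A p q s t / 4) * (X p q i j * X s t k l))
        = (\<Sum>p\<in>UNIV. \<Sum>q\<in>UNIV. (X p q i j / 4) * (\<Sum>s\<in>UNIV. \<Sum>t\<in>UNIV. A p q s t * X s t k l))"
      by (simp add: sum_distrib_left mult_ac)
    also have "\<dots> = (\<Sum>p\<in>UNIV. \<Sum>q\<in>UNIV. (A p q k l / 2) * X p q i j)"
      by (intro sum.cong refl) (simp add: delta_sum sym2[of _ _ l k])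
    also have "\<dots> = A i j k l / 2 + A j i k l / 2"
      by (rule delta_sum)
    also have "\<dots> = A i j k l" using sym1[of j i k l] by simp
    finally show ?thesis by simp
  qed

theorem theorem3p4:
  fixes A :: "('n::finite) tensor4"
  assumes "cps A"
  shows "\<exists>(r::nat) (lam::nat \<Rightarrow> real) (a::nat \<Rightarrow> real^'n) (b::nat \<Rightarrow> real^'n).
           A = (\<lambda>i j k l. \<Sum>p<r. lam p * outer4 (a p) (a p) (b p) (b p) i j k l)"
proof -
  have sym1: "A i j k l = A j i k l" and sym2: "A i j k l = A i j l k" for i j k l
    using assms unfolding cps_def by blast+
  have eq: "A i j k l = (\<Sum>p\<in>UNIV. \<Sum>q\<in>UNIV. \<Sum>s\<in>UNIV. \<Sum>t\<in>UNIV.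
              (A p q s t / 4) * (X p q i j * X s t k l))" for i j k l
    by (rule main_eq[OF sym1 sym2])
  have "rep (\<lambda>i j k l. \<Sum>p\<in>UNIV. \<Sum>q\<in>UNIV. \<Sum>s\<in>UNIV. \<Sum>t\<in>UNIV.
              (A p q s t / 4) * (X p q i j * X s t k l))"
  proof -
    have t: "rep (\<lambda>i j k l. (A p q s t / 4) * (X p q i j * X s t k l))" for p q s t
      unfolding X_def by (rule rep_term)
    show ?thesis
      apply (rule rep_sum, simp)+
      apply (rule t)
      done
  qed
  moreover have E: "(\<lambda>i j k l. \<Sum>p\<in>UNIV. \<Sum>q\<in>UNIV. \<Sum>s\<in>UNIV. \<Sum>t\<in>UNIV.
              (A p q s t / 4) * (X p q i j * X s t k l)) = A"
    by (intro ext) (rule eq[symmetric])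
  ultimately have "rep A" by (simp only:)
  then show ?thesis unfolding rep_def .
qed

end
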